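(* Let $\gamma>0$. For a multiset $S=\{G_1,\dots,G_N\}$ of $N\ge 2$ elements equipped with a nonnegative symmetric distance $D$, define the Energy diversity $$\mathrm{div}(S) = -\frac{1}{N(N-1)}\sum_{i\neq j}\frac{1}{D(G_i,G_j)^{\gamma}},$$ with the convention $1/0=+\infty$ (so $\mathrm{div}(S)=-\infty$ whenever two elements are at distance $0$). Then Energy satisfies both the monotonicity property and the uniqueness property.
   Context: Monotonicity: whenever $S,S'$ are multisets each consisting of $N$ distinct elements and $g:S\to S'$ is a bijection with $D(G_i,G_j)\le D(g(G_i),g(G_j))$ for all $G_i,G_j\in S$, with strict inequality for at least one pair, then $\mathrm{div}(S)<\mathrm{div}(S')$. Uniqueness: whenever $S$ consists of $N$ distinct elements $G_1,\dots,G_N$ and $S_{ij}=(S\setminus\{G_i\})\cup\{G_j\}$ for $j\neq i$ (i.e. $G_i$ is removed and a second copy of $G_j$ is added), then $\mathrm{div}(S)>\mathrm{div}(S_{ij})$. Here distinct elements are assumed to be at positive distance from each other. *)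

theory Defs
  imports Complex_Main "HOL-Library.Multiset" "HOL-Library.Extended_Real"
begin

definition energy_term :: "real \<Rightarrow> ('a \<Rightarrow> 'a \<Rightarrow> real) \<Rightarrow> 'a \<Rightarrow> 'a \<Rightarrow> ereal" where
  "energy_term \<gamma> D x y = (if D x y = 0 then \<infinity> else ereal (1 / (D x y powr \<gamma>)))"

text \<open>Energy diversity of a multiset S of N elements:
  -1/(N(N-1)) * sum over ordered pairs of distinct positions i \<noteq> j.\<close>
definition energy_div :: "real \<Rightarrow> ('a \<Rightarrow> 'a \<Rightarrow> real) \<Rightarrow> 'a multiset \<Rightarrow> ereal" where
  "energy_div \<gamma> D S =
     - (ereal (1 / (real (size S) * (real (size S) - 1))) *
        (\<Sum>\<^sub># (image_mset (\<lambda>x. \<Sum>\<^sub># (image_mset (\<lambda>y. energy_term \<gamma> D x y) (S - {#x#}))) S)))"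

text \<open>Monotonicity property (multisets of N distinct elements = finite sets of card N).\<close>
definition monotonicity_prop :: "('a multiset \<Rightarrow> ereal) \<Rightarrow> ('a \<Rightarrow> 'a \<Rightarrow> real) \<Rightarrow> nat \<Rightarrow> bool" where
  "monotonicity_prop dv D N \<longleftrightarrow>
    (\<forall>S S' g. finite S \<and> finite S' \<and> card S = N \<and> card S' = N \<and>
       (\<forall>x\<in>S. \<forall>y\<in>S. x \<noteq> y \<longrightarrow> D x y > 0) \<and>
       (\<forall>x\<in>S'. \<forall>y\<in>S'. x \<noteq> y \<longrightarrow> D x y > 0) \<and>
       bij_betw g S S' \<and>
       (\<forall>x\<in>S. \<forall>y\<in>S. D x y \<le> D (g x) (g y)) \<and>
       (\<exists>x\<in>S. \<exists>y\<in>S. D x y < D (g x) (g y))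
     \<longrightarrow> dv (mset_set S) < dv (mset_set S'))"

definition uniqueness_prop :: "('a multiset \<Rightarrow> ereal) \<Rightarrow> ('a \<Rightarrow> 'a \<Rightarrow> real) \<Rightarrow> nat \<Rightarrow> bool" where
  "uniqueness_prop dv D N \<longleftrightarrow>
    (\<forall>S. finite S \<and> card S = N \<and>
       (\<forall>x\<in>S. \<forall>y\<in>S. x \<noteq> y \<longrightarrow> D x y > 0) \<longrightarrow>
       (\<forall>Gi\<in>S. \<forall>Gj\<in>S. Gi \<noteq> Gj \<longrightarrow>
          dv (mset_set (S - {Gi}) + {#Gj#}) < dv (mset_set S)))"

end

theory Submission
  imports Defs
begin

lemma sum_mset_inf: "(\<infinity>::ereal) \<in># M \<Longrightarrow> sum_mset M = \<infinity>"
  by (metis mset_add plus_ereal.simps(2) sum_mset.add_mset)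

lemma div_set:
  assumes fin: "finite S" and pos: "\<forall>x\<in>S. \<forall>y\<in>S. x \<noteq> y \<longrightarrow> D x y > 0"
  shows "energy_div \<gamma> D (mset_set S) =
    ereal (- (1 / (real (card S) * (real (card S) - 1))) *
      (\<Sum>x\<in>S. \<Sum>y\<in>S - {x}. 1 / (D x y powr \<gamma>)))"
proof -
  have inner: "\<Sum>\<^sub># (image_mset (\<lambda>y. energy_term \<gamma> D x y) (mset_set S - {#x#}))
      = ereal (\<Sum>y\<in>S - {x}. 1 / (D x y powr \<gamma>))" if "x \<in> S" for x
  proof -
    have "mset_set S - {#x#} = mset_set (S - {x})"
      using mset_set_Diff[of S "{x}"] fin that by simp
    then have "\<Sum>\<^sub># (image_mset (\<lambda>y. energy_term \<gamma> D x y) (mset_set S - {#x#}))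
       = (\<Sum>y\<in>S - {x}. energy_term \<gamma> D x y)" by (simp add: sum_unfold_sum_mset)
    also have "\<dots> = (\<Sum>y\<in>S - {x}. ereal (1 / (D x y powr \<gamma>)))"
      using pos that by (intro sum.cong) (fastforce simp: energy_term_def)+
    finally show ?thesis by (simp add: sum_ereal)
  qed
  have "\<Sum>\<^sub># (image_mset (\<lambda>x. \<Sum>\<^sub># (image_mset (\<lambda>y. energy_term \<gamma> D x y) (mset_set S - {#x#}))) (mset_set S))
     = (\<Sum>x\<in>S. \<Sum>\<^sub># (image_mset (\<lambda>y. energy_term \<gamma> D x y) (mset_set S - {#x#})))"
    by (simp add: sum_unfold_sum_mset)
  also have "\<dots> = (\<Sum>x\<in>S. ereal (\<Sum>y\<in>S - {x}. 1 / (D x y powr \<gamma>)))"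
    using inner by (intro sum.cong) auto
  also have "\<dots> = ereal (\<Sum>x\<in>S. \<Sum>y\<in>S - {x}. 1 / (D x y powr \<gamma>))" by (simp add: sum_ereal)
  finally show ?thesis unfolding energy_div_def using fin by simp
qed

theorem proposition1:
  fixes \<gamma> :: real and D :: "'a \<Rightarrow> 'a \<Rightarrow> real" and N :: nat
  assumes "\<gamma> > 0"
    and "\<And>x y. D x y \<ge> 0"
    and "\<And>x y. D x y = D y x"
    and "\<And>x. D x x = 0"
    and "N \<ge> 2"
  shows "monotonicity_prop (energy_div \<gamma> D) D N \<and> uniqueness_prop (energy_div \<gamma> D) D N"
proof
  have cpos: "1 / (real N * (real N - 1)) > 0" using assms(5) by simp
  show "monotonicity_prop (energy_div \<gamma> D) D N"
    unfolding monotonicity_prop_def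
  proof (intro allI impI, elim conjE)
    fix S S' :: "'a set" and g
    assume fS: "finite S" and fS': "finite S'" and cS: "card S = N" and cS': "card S' = N"
      and pS: "\<forall>x\<in>S. \<forall>y\<in>S. x \<noteq> y \<longrightarrow> D x y > 0"
      and pS': "\<forall>x\<in>S'. \<forall>y\<in>S'. x \<noteq> y \<longrightarrow> D x y > 0"
      and bij: "bij_betw g S S'"
      and le: "\<forall>x\<in>S. \<forall>y\<in>S. D x y \<le> D (g x) (g y)"
      and ex: "\<exists>x\<in>S. \<exists>y\<in>S. D x y < D (g x) (g y)"
    let ?f = "\<lambda>x y. 1 / (D x y powr \<gamma>)"
    have inj: "inj_on g S" using bij bij_betw_imp_inj_on by blast
    have img: "g ` S = S'" using bij bij_betw_imp_surj_on by blast
    have re: "(\<Sum>x\<in>S'. \<Sum>y\<in>S' - {x}. ?f x y) = (\<Sum>x\<in>S. \<Sum>y\<in>S - {x}. ?f (g x) (g y))"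
    proof -
      have "(\<Sum>x\<in>S'. \<Sum>y\<in>S' - {x}. ?f x y) = (\<Sum>x\<in>S. \<Sum>y\<in>S' - {g x}. ?f (g x) y)"
        using sum.reindex[OF inj, of "\<lambda>x. \<Sum>y\<in>S' - {x}. ?f x y"] img by simp
      also have "\<dots> = (\<Sum>x\<in>S. \<Sum>y\<in>S - {x}. ?f (g x) (g y))"
      proof (rule sum.cong)
        fix x assume x: "x \<in> S"
        have "S' - {g x} = g ` (S - {x})" using img inj x by (auto simp: inj_on_image_set_diff)
        moreover have "inj_on g (S - {x})" using inj by (rule inj_on_subset) auto
        ultimately show "(\<Sum>y\<in>S' - {g x}. ?f (g x) y) = (\<Sum>y\<in>S - {x}. ?f (g x) (g y))"
          by (simp add: sum.reindex)
      qed simp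
      finally show ?thesis .
    qed
    have term_le: "?f (g x) (g y) \<le> ?f x y" if "x \<in> S" "y \<in> S - {x}" for x y
    proof -
      have "D x y > 0" using pS that by auto
      moreover have "D x y powr \<gamma> \<le> D (g x) (g y) powr \<gamma>"
        using le that \<open>D x y > 0\<close> assms(1) by (intro powr_mono2) auto
      ultimately show ?thesis using le that by (intro divide_left_mono) (auto intro!: mult_pos_pos)
    qed
    obtain x0 y0 where xy: "x0 \<in> S" "y0 \<in> S" "D x0 y0 < D (g x0) (g y0)" using ex by blast
    have "x0 \<noteq> y0" using xy assms(4) by auto
    have term_lt: "?f (g x0) (g y0) < ?f x0 y0"
    proof -
      have "D x0 y0 > 0" using pS xy \<open>x0 \<noteq> y0\<close> by auto
      moreover have "D x0 y0 powr \<gamma> < D (g x0) (g y0) powr \<gamma>"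
        using xy \<open>D x0 y0 > 0\<close> assms(1) by (intro powr_less_mono2) auto
      ultimately show ?thesis using xy by (intro divide_strict_left_mono) (auto intro!: mult_pos_pos)
    qed
    have lt: "(\<Sum>x\<in>S. \<Sum>y\<in>S - {x}. ?f (g x) (g y)) < (\<Sum>x\<in>S. \<Sum>y\<in>S - {x}. ?f x y)"
    proof (rule sum_strict_mono_ex1[OF fS])
      show "\<forall>x\<in>S. (\<Sum>y\<in>S - {x}. ?f (g x) (g y)) \<le> (\<Sum>y\<in>S - {x}. ?f x y)"
        using term_le by (auto intro!: sum_mono)
      show "\<exists>x\<in>S. (\<Sum>y\<in>S - {x}. ?f (g x) (g y)) < (\<Sum>y\<in>S - {x}. ?f x y)"
      proof (rule bexI[of _ x0])
        show "(\<Sum>y\<in>S - {x0}. ?f (g x0) (g y)) < (\<Sum>y\<in>S - {x0}. ?f x0 y)"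
        proof (rule sum_strict_mono_ex1)
          show "finite (S - {x0})" using fS by simp
          show "\<forall>y\<in>S - {x0}. ?f (g x0) (g y) \<le> ?f x0 y" using term_le xy(1) by blast
          show "\<exists>y\<in>S - {x0}. ?f (g x0) (g y) < ?f x0 y"
            using term_lt xy(2) \<open>x0 \<noteq> y0\<close> by (intro bexI[of _ y0]) auto
        qed
      qed (rule xy(1))
    qed
    show "energy_div \<gamma> D (mset_set S) < energy_div \<gamma> D (mset_set S')"
      unfolding div_set[OF fS pS] div_set[OF fS' pS'] cS cS' re
      using lt cpos by (simp add: divide_strict_right_mono)
  qed
  show "uniqueness_prop (energy_div \<gamma> D) D N"
    unfolding uniqueness_prop_def
  proof (intro allI impI ballI, elim conjE)
    fix S :: "'a set" and Gi Gj
    assume fS: "finite S" and cS: "card S = N"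
      and pS: "\<forall>x\<in>S. \<forall>y\<in>S. x \<noteq> y \<longrightarrow> D x y > 0"
      and Gi: "Gi \<in> S" and Gj: "Gj \<in> S" and ne: "Gi \<noteq> Gj"
    let ?M = "mset_set (S - {Gi}) + {#Gj#}"
    have inGj: "Gj \<in># mset_set (S - {Gi})" using fS Gj ne by simp
    have szM: "size ?M = N"
      using fS Gi cS assms(5) by simp
    have inner: "\<Sum>\<^sub># (image_mset (\<lambda>y. energy_term \<gamma> D Gj y) (?M - {#Gj#})) = \<infinity>"
      by (rule sum_mset_inf) (use inGj assms(4) in \<open>force simp: energy_term_def\<close>)
    have outer: "\<Sum>\<^sub># (image_mset (\<lambda>x. \<Sum>\<^sub># (image_mset (\<lambda>y. energy_term \<gamma> D x y) (?M - {#x#}))) ?M) = \<infinity>"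
      by (rule sum_mset_inf) (use inner in \<open>force\<close>)
    have "energy_div \<gamma> D ?M = - \<infinity>"
      unfolding energy_div_def outer szM using cpos assms(5) by simp
    then show "energy_div \<gamma> D ?M < energy_div \<gamma> D (mset_set S)"
      unfolding div_set[OF fS pS] by simp
  qed
qed

end
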